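(* Let $\Omega=(a,b)\subset\mathbb{R}$ be a bounded interval with $a=kh$, $b=lh$ for a mesh size $h>0$ and integers $k,l$ with $l-k>1$. Then $$\sum_{x\in\Omega_h}\frac{u(x)^2}{\operatorname{dist}(x,\partial\Omega_h)^2}\le4\sum_{x\in\overline{\Omega}_h\setminus\partial^+\Omega_h}\big(D_h^+u(x)\big)^2$$ for all $u\in W_0^{1,2}(\overline{\Omega}_h)$.
   Context: $\overline{\Omega}_h=[a,b]\cap h\mathbb{Z}$, $\Omega_h=(a,b)\cap h\mathbb{Z}$, $\partial\Omega_h=\{a,b\}$, $\partial^+\Omega_h=\{b\}$, $D_h^+u(x)=\frac{u(x+h)-u(x)}{h}$. $W_0^{1,2}(\overline{\Omega}_h)$ is the set of $u:\overline{\Omega}_h\to\mathbb{R}$ with $u(a)=u(b)=0$. $\operatorname{dist}(x,\partial\Omega_h)=\min\{x-a,b-x\}$. *)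

theory Defs
  imports "HOL-Analysis.Analysis"
begin

definition grid :: "real \<Rightarrow> real set" where
  "grid h = {x. \<exists>j::int. x = of_int j * h}"

definition closed_grid :: "real \<Rightarrow> real \<Rightarrow> real \<Rightarrow> real set" where
  "closed_grid h a b = {a..b} \<inter> grid h"

definition open_grid :: "real \<Rightarrow> real \<Rightarrow> real \<Rightarrow> real set" where
  "open_grid h a b = {a<..<b} \<inter> grid h"

definition bdry_grid :: "real \<Rightarrow> real \<Rightarrow> real set" where
  "bdry_grid a b = {a, b}"

definition bdry_plus_grid :: "real \<Rightarrow> real set" where
  "bdry_plus_grid b = {b}"

definition fwd_diff :: "real \<Rightarrow> (real \<Rightarrow> real) \<Rightarrow> real \<Rightarrow> real" where
  "fwd_diff h u x = (u (x + h) - u x) / h"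

definition W012_0 :: "real \<Rightarrow> real \<Rightarrow> real \<Rightarrow> (real \<Rightarrow> real) set" where
  "W012_0 h a b = {u. u a = 0 \<and> u b = 0}"

definition dist_bdry :: "real \<Rightarrow> real \<Rightarrow> real \<Rightarrow> real" where
  "dist_bdry a b x = min (x - a) (b - x)"

end

theory Submission
  imports Defs
begin

lemma quad_ineq:
  fixes n x y :: real assumes "n \<ge> 1"
  shows "x^2 + 2*n*x^2 - 2*(n-1)*y^2 \<le> 4*(n*x-(n-1)*y)^2"
proof -
  define A where "A = 4*n^2-2*n-1"
  define B where "B = -4*n*(n-1)"
  have A: "A > 0" proof -
    have "n^2 \<ge> n" using assms by (simp add: power2_eq_square)
    thus ?thesis using assms unfolding A_def by linarith
  qed
  have "A * (4*(n*x-(n-1)*y)^2 - (x^2 + 2*n*x^2 - 2*(n-1)*y^2)) = (A*x+B*y)^2 + 2*(n-1)*y^2"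
    unfolding A_def B_def by (simp add: algebra_simps power2_eq_square)
  also have "\<dots> \<ge> 0" using assms by simp
  finally show ?thesis using A by (simp add: zero_le_mult_iff)
qed

lemma hardy_aux:
  fixes f :: "nat \<Rightarrow> real" assumes "f 0 = 0"
  shows "(\<Sum>n\<in>{1..m}. (f n)^2/(real n)^2) + 2*(f m)^2/real m \<le> 4*(\<Sum>n\<in>{1..m}. (f n - f (n-1))^2)"
proof (induction m)
  case 0 then show ?case by simp
next
  case (Suc m)
  have step: "(f (Suc m))^2/(real (Suc m))^2 + 2*(f (Suc m))^2/real (Suc m) - 2*(f m)^2/real m
      \<le> 4*(f (Suc m) - f m)^2"
  proof (cases "m = 0")
    case True then show ?thesis using assms by (simp add: power2_eq_square)
  next
    case False
    define n where "n = real (Suc m)"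
    define x where "x = f (Suc m) / n"
    define y where "y = f m / (n-1)"
    have n1: "n \<ge> 2" using False unfolding n_def by simp
    have q: "x^2 + 2*n*x^2 - 2*(n-1)*y^2 \<le> 4*(n*x-(n-1)*y)^2" using quad_ineq n1 by simp
    have e1: "f (Suc m) = n*x" using n1 unfolding x_def by simp
    have e2: "f m = (n-1)*y" using n1 unfolding y_def by simp
    have e3: "real m = n - 1" unfolding n_def by simp
    have ns: "real (Suc m) = n" unfolding n_def by simp
    have "(f (Suc m))^2/(real (Suc m))^2 = x^2" unfolding ns e1 using n1 by (simp add: power2_eq_square)
    moreover have "2*(f (Suc m))^2/real (Suc m) = 2*n*x^2" unfolding ns e1 using n1 by (simp add: power2_eq_square)
    moreover have "2*(f m)^2/real m = 2*(n-1)*y^2" using n1 by (simp add: e2 e3 power2_eq_square)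
    ultimately show ?thesis using q e1 e2 by simp
  qed
  show ?case using Suc.IH step by simp
qed

lemma hardy:
  fixes f :: "nat \<Rightarrow> real" assumes "f 0 = 0"
  shows "(\<Sum>n\<in>{1..m}. (f n)^2/(real n)^2) \<le> 4*(\<Sum>n\<in>{1..m}. (f n - f (n-1))^2)"
proof -
  have "2*(f m)^2/real m \<ge> 0" by simp
  thus ?thesis using hardy_aux[of f m, OF assms] by linarith
qed

lemma hardy2:
  fixes v :: "nat \<Rightarrow> real" assumes "v 0 = 0" "v N = 0"
  shows "(\<Sum>n\<in>{1..<N}. (v n)^2/(min (real n) (real N - real n))^2)
     \<le> 4*(\<Sum>n<N. (v (Suc n) - v n)^2)"
proof -
  define m where "m = N div 2"
  have mN: "m \<le> N" unfolding m_def by simp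
  have split: "{1..<N} = {1..m} \<union> {Suc m..<N}" unfolding m_def by auto
  have S1: "(\<Sum>n\<in>{1..m}. (v n)^2/(min (real n) (real N - real n))^2) = (\<Sum>n\<in>{1..m}. (v n)^2/(real n)^2)"
  proof (rule sum.cong)
    fix n assume "n \<in> {1..m}"
    hence "real n \<le> real N - real n" unfolding m_def by auto
    thus "(v n)^2/(min (real n) (real N - real n))^2 = (v n)^2/(real n)^2" by simp
  qed simp
  have S2: "(\<Sum>n\<in>{Suc m..<N}. (v n)^2/(min (real n) (real N - real n))^2)
      = (\<Sum>j\<in>{1..N - Suc m}. (v (N-j))^2/(real j)^2)"
  proof (rule sum.reindex_bij_witness[of _ "\<lambda>j. N - j" "\<lambda>n. N - n"])
    fix n assume n: "n \<in> {Suc m..<N}"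
    hence "real N - real n \<le> real n" unfolding m_def by auto
    hence "min (real n) (real N - real n) = real (N - n)" using n by auto
    thus "(v (N - (N - n)))^2/(real (N - n))^2 = (v n)^2/(min (real n) (real N - real n))^2"
      using n by simp
  qed auto
  have D1: "(\<Sum>n\<in>{1..m}. (v n - v (n-1))^2) = (\<Sum>n<m. (v (Suc n) - v n)^2)"
    by (rule sum.reindex_bij_witness[of _ "\<lambda>n. Suc n" "\<lambda>n. n - 1"]) auto
  have D2: "(\<Sum>j\<in>{1..N - Suc m}. (v (N-j) - v (N - (j-1)))^2) = (\<Sum>n\<in>{Suc m..<N}. (v (Suc n) - v n)^2)"
  proof (rule sum.reindex_bij_witness[of _ "\<lambda>n. N - n" "\<lambda>j. N - j"])
    fix j assume j: "j \<in> {1..N - Suc m}"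
    hence a: "N - (j - 1) = Suc (N - j)" by auto
    show "(v (Suc (N - j)) - v (N - j))^2 = (v (N - j) - v (N - (j - 1)))^2" unfolding a
      by (simp add: power2_commute)
  qed auto
  note H1 = hardy[of v m, OF assms(1)]
  note H2 = hardy[of "\<lambda>j. v (N - j)" "N - Suc m"]
  have "(\<Sum>n<m. (v (Suc n) - v n)^2) + (\<Sum>n\<in>{Suc m..<N}. (v (Suc n) - v n)^2)
        \<le> (\<Sum>n<N. (v (Suc n) - v n)^2)"
  proof -
    have "{..<m} \<union> {Suc m..<N} \<subseteq> {..<N}" using mN by auto
    moreover have "(\<Sum>n<m. (v (Suc n) - v n)^2) + (\<Sum>n\<in>{Suc m..<N}. (v (Suc n) - v n)^2)
       = (\<Sum>n\<in>{..<m} \<union> {Suc m..<N}. (v (Suc n) - v n)^2)"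
      by (rule sum.union_disjoint[symmetric]) auto
    ultimately show ?thesis by (metis (no_types, lifting) finite_lessThan sum_mono2 zero_le_power2)
  qed
  moreover have "(\<Sum>n\<in>{1..<N}. (v n)^2/(min (real n) (real N - real n))^2)
     = (\<Sum>n\<in>{1..m}. (v n)^2/(min (real n) (real N - real n))^2) + (\<Sum>n\<in>{Suc m..<N}. (v n)^2/(min (real n) (real N - real n))^2)"
    unfolding split by (rule sum.union_disjoint) auto
  ultimately show ?thesis using H1 H2 S1 S2 D1 D2 assms(2) by simp
qed

theorem mainTheorem19:
  fixes h a b :: real and k l :: int and u :: "real \<Rightarrow> real"
  assumes "h > 0" and "a = of_int k * h" and "b = of_int l * h" and "l - k > 1"
    and "u \<in> W012_0 h a b"
  shows "(\<Sum>x\<in>open_grid h a b. (u x)^2 / (dist_bdry a b x)^2)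
           \<le> 4 * (\<Sum>x\<in>closed_grid h a b - bdry_plus_grid b. (fwd_diff h u x)^2)"
proof -
  define N where "N = nat (l - k)"
  define p where "p = (\<lambda>n::nat. of_int (k + int n) * h)"
  define v where "v = (\<lambda>n. u (p n))"
  have hp: "h > 0" using assms(1) .
  have lN: "l = k + int N" using assms(4) unfolding N_def by simp
  have inj: "inj_on p A" for A
    unfolding p_def inj_on_def using hp by auto
  have v0: "v 0 = 0" using assms(2,5) unfolding v_def p_def W012_0_def by simp
  have vN: "v N = 0" using assms(3,5) unfolding v_def p_def W012_0_def lN by simp
  have og: "open_grid h a b = p ` {1..<N}"
  proof
    show "open_grid h a b \<subseteq> p ` {1..<N}"
    proof
      fix x assume "x \<in> open_grid h a b"
      then obtain j :: int where x: "x = of_int j * h" and ax: "a < x" and xb: "x < b"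
        unfolding open_grid_def grid_def by auto
      have "k < j" using ax hp unfolding x assms(2) by simp
      moreover have "j < l" using xb hp unfolding x assms(3) by simp
      ultimately have "nat (j - k) \<in> {1..<N}" "x = p (nat (j - k))" unfolding N_def p_def x by auto
      thus "x \<in> p ` {1..<N}" by blast
    qed
  next
    show "p ` {1..<N} \<subseteq> open_grid h a b"
    proof
      fix x assume "x \<in> p ` {1..<N}"
      then obtain n where n: "n \<in> {1..<N}" "x = p n" by auto
      have "x \<in> grid h" unfolding n grid_def p_def by blast
      moreover have "a < x" "x < b" using n hp unfolding p_def assms(2,3) lN by auto
      ultimately show "x \<in> open_grid h a b" unfolding open_grid_def by auto
    qed
  qed
  have cg: "closed_grid h a b - bdry_plus_grid b = p ` {..<N}"
  proof
    show "closed_grid h a b - bdry_plus_grid b \<subseteq> p ` {..<N}"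
    proof
      fix x assume "x \<in> closed_grid h a b - bdry_plus_grid b"
      then obtain j :: int where x: "x = of_int j * h" and ax: "a \<le> x" and xb: "x < b"
        unfolding closed_grid_def grid_def bdry_plus_grid_def by auto
      have "k \<le> j" using ax hp unfolding x assms(2) by simp
      moreover have "j < l" using xb hp unfolding x assms(3) by simp
      ultimately have "nat (j - k) \<in> {..<N}" "x = p (nat (j - k))" unfolding N_def p_def x by auto
      thus "x \<in> p ` {..<N}" by blast
    qed
  next
    show "p ` {..<N} \<subseteq> closed_grid h a b - bdry_plus_grid b"
    proof
      fix x assume "x \<in> p ` {..<N}"
      then obtain n where n: "n \<in> {..<N}" "x = p n" by auto
      have "x \<in> grid h" unfolding n grid_def p_def by blast
      moreover have "a \<le> x" "x < b" using n hp unfolding p_def assms(2,3) lN by auto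
      ultimately show "x \<in> closed_grid h a b - bdry_plus_grid b"
        unfolding closed_grid_def bdry_plus_grid_def by auto
    qed
  qed
  have L: "(\<Sum>x\<in>open_grid h a b. (u x)^2 / (dist_bdry a b x)^2)
      = (\<Sum>n\<in>{1..<N}. (v n)^2/(min (real n) (real N - real n))^2) / h^2"
    unfolding og sum.reindex[OF inj] sum_divide_distrib
  proof (rule sum.cong)
    fix n assume "n \<in> {1..<N}"
    have "dist_bdry a b (p n) = h * min (real n) (real N - real n)"
      unfolding dist_bdry_def p_def assms(2,3) lN using hp
      by (simp add: algebra_simps min_mult_distrib_left)
    thus "((\<lambda>x. (u x)^2 / (dist_bdry a b x)^2) \<circ> p) n = (v n)^2/(min (real n) (real N - real n))^2 / h^2"
      unfolding v_def by (simp add: power_mult_distrib)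
  qed simp
  have R: "(\<Sum>x\<in>closed_grid h a b - bdry_plus_grid b. (fwd_diff h u x)^2)
      = (\<Sum>n<N. (v (Suc n) - v n)^2) / h^2"
    unfolding cg sum.reindex[OF inj] sum_divide_distrib
  proof (rule sum.cong)
    fix n assume "n \<in> {..<N}"
    have "p n + h = p (Suc n)" unfolding p_def by (simp add: algebra_simps)
    thus "((\<lambda>x. (fwd_diff h u x)^2) \<circ> p) n = (v (Suc n) - v n)^2 / h^2"
      unfolding v_def fwd_diff_def by (simp add: power_divide)
  qed simp
  note H = hardy2[of v N, OF v0 vN]
  show ?thesis unfolding L R using H hp
    by (simp add: divide_right_mono)
qed

end
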